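(* Let $\mathcal L_0$ be a recursive language, and $\mathcal L_1,\mathcal L_2$ recursive extensions of $\mathcal L_0$ with $\mathcal L_1\cap\mathcal L_2=\mathcal L_0$. Let $T_0$ be a complete first-order $\mathcal L_0$-theory, and for $i=1,2$ let $T_i$ be a first-order $\mathcal L_i$-theory and $p_i(\bar x)$ an $\mathcal L_i$-type. If $\mathrm{Con}_{\mathrm{sat}}(T_1+p_1{\uparrow}/T_0)$ and $\mathrm{Con}_{\mathrm{sat}}(T_2+p_2{\uparrow}/T_0)$, then there is a countable model of $T_0+T_1+T_2+p_1{\uparrow}+p_2{\uparrow}$.
   Context: A "type" $p(\bar x)$ is any set of first-order formulas with free variables among $\bar x$; $p{\uparrow}$ is the $\mathcal L_{\omega_1\omega}$-sentence $\forall\bar x\bigvee_{\psi\in p}\neg\psi(\bar x)$ expressing that $p$ is omitted. For a first-order theory $T_0$ in $\mathcal L$ and a (possibly non-first-order) theory $S$ in an extension $\mathcal L^+$, $\mathrm{Con}_{\mathrm{sat}}(S/T_0)$ means there is a model of $T_0+S$ whose $\mathcal L$-reduct is $\omega$-saturated. *)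

theory Defs
  imports Main
begin

inductive recfn :: "nat \<Rightarrow> (nat list \<Rightarrow> nat) \<Rightarrow> bool" where
  zero: "recfn n (\<lambda>_. 0)"
| suc:  "recfn 1 (\<lambda>xs. Suc (xs ! 0))"
| proj: "i < n \<Longrightarrow> recfn n (\<lambda>xs. xs ! i)"
| comp: "recfn m g \<Longrightarrow> length hs = m \<Longrightarrow> (\<forall>h\<in>set hs. recfn n h)
          \<Longrightarrow> recfn n (\<lambda>xs. g (map (\<lambda>h. h xs) hs))"
| prec: "recfn n g \<Longrightarrow> recfn (Suc (Suc n)) h
          \<Longrightarrow> recfn (Suc n) (\<lambda>xs. rec_nat (g (tl xs)) (\<lambda>y r. h (y # r # tl xs)) (hd xs))"
| mu:   "recfn (Suc n) g \<Longrightarrow> (\<forall>xs. length xs = n \<longrightarrow> (\<exists>y. g (y # xs) = 0))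
          \<Longrightarrow> recfn n (\<lambda>xs. LEAST y. g (y # xs) = 0)"

definition recursive_set :: "nat set \<Rightarrow> bool" where
  "recursive_set S \<longleftrightarrow> (\<exists>f. recfn 1 f \<and> (\<forall>x. x \<in> S \<longleftrightarrow> f [x] = 0))"

definition computable_on :: "nat set \<Rightarrow> (nat \<Rightarrow> nat) \<Rightarrow> bool" where
  "computable_on S g \<longleftrightarrow> (\<exists>f. recfn 1 f \<and> (\<forall>x\<in>S. f [x] = g x))"

text \<open>Symbols are natural numbers; arities are given by global functions
  (relation arity ra, function arity fa), so all languages are sublanguages of one
  big signature and agree on shared symbols. Constants are 0-ary function symbols.\<close>

record lang =
  rsyms :: "nat set"
  fsyms :: "nat set"

definition sublang :: "lang \<Rightarrow> lang \<Rightarrow> bool" where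
  "sublang L L' \<longleftrightarrow> rsyms L \<subseteq> rsyms L' \<and> fsyms L \<subseteq> fsyms L'"

definition lang_union :: "lang \<Rightarrow> lang \<Rightarrow> lang" where
  "lang_union L L' = \<lparr>rsyms = rsyms L \<union> rsyms L', fsyms = fsyms L \<union> fsyms L'\<rparr>"

definition lang_inter :: "lang \<Rightarrow> lang \<Rightarrow> lang" where
  "lang_inter L L' = \<lparr>rsyms = rsyms L \<inter> rsyms L', fsyms = fsyms L \<inter> fsyms L'\<rparr>"

definition recursive_lang :: "(nat \<Rightarrow> nat) \<Rightarrow> (nat \<Rightarrow> nat) \<Rightarrow> lang \<Rightarrow> bool" where
  "recursive_lang ra fa L \<longleftrightarrow> recursive_set (rsyms L) \<and> recursive_set (fsyms L)
     \<and> computable_on (rsyms L) ra \<and> computable_on (fsyms L) fa"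

datatype trm = Var nat | Fn nat "trm list"

datatype fm = Bot | Eq trm trm | Rel nat "trm list" | Neg fm | Conj fm fm | Ex nat fm

fun wf_trm :: "(nat \<Rightarrow> nat) \<Rightarrow> lang \<Rightarrow> trm \<Rightarrow> bool" where
  "wf_trm fa L (Var v) = True"
| "wf_trm fa L (Fn f ts) = (f \<in> fsyms L \<and> length ts = fa f \<and> (\<forall>t\<in>set ts. wf_trm fa L t))"

fun wf_fm :: "(nat \<Rightarrow> nat) \<Rightarrow> (nat \<Rightarrow> nat) \<Rightarrow> lang \<Rightarrow> fm \<Rightarrow> bool" where
  "wf_fm ra fa L Bot = True"
| "wf_fm ra fa L (Eq s t) = (wf_trm fa L s \<and> wf_trm fa L t)"
| "wf_fm ra fa L (Rel r ts) = (r \<in> rsyms L \<and> length ts = ra r \<and> (\<forall>t\<in>set ts. wf_trm fa L t))"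
| "wf_fm ra fa L (Neg p) = wf_fm ra fa L p"
| "wf_fm ra fa L (Conj p q) = (wf_fm ra fa L p \<and> wf_fm ra fa L q)"
| "wf_fm ra fa L (Ex v p) = wf_fm ra fa L p"

fun vars_trm :: "trm \<Rightarrow> nat set" where
  "vars_trm (Var v) = {v}"
| "vars_trm (Fn f ts) = (\<Union>t\<in>set ts. vars_trm t)"

fun frees :: "fm \<Rightarrow> nat set" where
  "frees Bot = {}"
| "frees (Eq s t) = vars_trm s \<union> vars_trm t"
| "frees (Rel r ts) = (\<Union>t\<in>set ts. vars_trm t)"
| "frees (Neg p) = frees p"
| "frees (Conj p q) = frees p \<union> frees q"
| "frees (Ex v p) = frees p - {v}"

definition sentence :: "(nat \<Rightarrow> nat) \<Rightarrow> (nat \<Rightarrow> nat) \<Rightarrow> lang \<Rightarrow> fm \<Rightarrow> bool" where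
  "sentence ra fa L p \<longleftrightarrow> wf_fm ra fa L p \<and> frees p = {}"

definition theory_of :: "(nat \<Rightarrow> nat) \<Rightarrow> (nat \<Rightarrow> nat) \<Rightarrow> lang \<Rightarrow> fm set \<Rightarrow> bool" where
  "theory_of ra fa L T \<longleftrightarrow> (\<forall>p\<in>T. sentence ra fa L p)"

definition type_of :: "(nat \<Rightarrow> nat) \<Rightarrow> (nat \<Rightarrow> nat) \<Rightarrow> lang \<Rightarrow> nat list \<Rightarrow> fm set \<Rightarrow> bool" where
  "type_of ra fa L xs p \<longleftrightarrow> (\<forall>\<psi>\<in>p. wf_fm ra fa L \<psi> \<and> frees \<psi> \<subseteq> set xs)"

record 'a struc =
  dom :: "'a set"
  fnt :: "nat \<Rightarrow> 'a list \<Rightarrow> 'a"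
  rel :: "nat \<Rightarrow> 'a list \<Rightarrow> bool"

definition is_struc :: "(nat \<Rightarrow> nat) \<Rightarrow> lang \<Rightarrow> 'a struc \<Rightarrow> bool" where
  "is_struc fa L M \<longleftrightarrow> dom M \<noteq> {} \<and>
     (\<forall>f\<in>fsyms L. \<forall>as. length as = fa f \<and> set as \<subseteq> dom M \<longrightarrow> fnt M f as \<in> dom M)"

fun eval :: "'a struc \<Rightarrow> (nat \<Rightarrow> 'a) \<Rightarrow> trm \<Rightarrow> 'a" where
  "eval M e (Var v) = e v"
| "eval M e (Fn f ts) = fnt M f (map (eval M e) ts)"

fun sat :: "'a struc \<Rightarrow> (nat \<Rightarrow> 'a) \<Rightarrow> fm \<Rightarrow> bool" where
  "sat M e Bot = False"
| "sat M e (Eq s t) = (eval M e s = eval M e t)"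
| "sat M e (Rel r ts) = rel M r (map (eval M e) ts)"
| "sat M e (Neg p) = (\<not> sat M e p)"
| "sat M e (Conj p q) = (sat M e p \<and> sat M e q)"
| "sat M e (Ex v p) = (\<exists>a\<in>dom M. sat M (e(v := a)) p)"

definition assign :: "'a struc \<Rightarrow> (nat \<Rightarrow> 'a) \<Rightarrow> bool" where
  "assign M e \<longleftrightarrow> range e \<subseteq> dom M"

definition models :: "'a struc \<Rightarrow> fm set \<Rightarrow> bool" where
  "models M T \<longleftrightarrow> (\<forall>p\<in>T. \<forall>e. assign M e \<longrightarrow> sat M e p)"

text \<open>M satisfies p\<up> = \<forall>xs. \<Or>_{\<psi>\<in>p} \<not>\<psi>(xs), i.e. M omits p.\<close>
definition omits :: "'a struc \<Rightarrow> fm set \<Rightarrow> bool" where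
  "omits M p \<longleftrightarrow> (\<forall>e. assign M e \<longrightarrow> (\<exists>\<psi>\<in>p. \<not> sat M e \<psi>))"

text \<open>The L-reduct of M is \<omega>-saturated: every set of L-formulas in one free
  variable x with finitely many parameters (the values under e of the finitely many other
  free variables) that is finitely satisfiable in M is realized in M.\<close>
definition omega_saturated :: "(nat \<Rightarrow> nat) \<Rightarrow> (nat \<Rightarrow> nat) \<Rightarrow> lang \<Rightarrow> 'a struc \<Rightarrow> bool" where
  "omega_saturated ra fa L M \<longleftrightarrow>
     (\<forall>x V e \<Sigma>. finite V \<and> assign M e \<and>
        (\<forall>\<phi>\<in>\<Sigma>. wf_fm ra fa L \<phi> \<and> frees \<phi> \<subseteq> insert x V) \<and>
        (\<forall>\<Sigma>0. finite \<Sigma>0 \<and> \<Sigma>0 \<subseteq> \<Sigma> \<longrightarrow> (\<exists>a\<in>dom M. \<forall>\<phi>\<in>\<Sigma>0. sat M (e(x := a)) \<phi>))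
      \<longrightarrow> (\<exists>a\<in>dom M. \<forall>\<phi>\<in>\<Sigma>. sat M (e(x := a)) \<phi>))"

text \<open>Models are taken over the countable carrier type nat; for countable (in
  particular recursive) languages this agrees with semantic consequence by
  Loewenheim-Skolem, and it is implied by completeness in any other sense.\<close>
definition complete_theory :: "(nat \<Rightarrow> nat) \<Rightarrow> (nat \<Rightarrow> nat) \<Rightarrow> lang \<Rightarrow> fm set \<Rightarrow> bool" where
  "complete_theory ra fa L T \<longleftrightarrow> theory_of ra fa L T \<and>
     (\<forall>\<phi>. sentence ra fa L \<phi> \<longrightarrow>
        (\<forall>M :: nat struc. is_struc fa L M \<and> models M T \<longrightarrow> (\<forall>e. assign M e \<longrightarrow> sat M e \<phi>)) \<or>
        (\<forall>M :: nat struc. is_struc fa L M \<and> models M T \<longrightarrow> (\<forall>e. assign M e \<longrightarrow> sat M e (Neg \<phi>))))"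

definition con_sat ::
  "(nat \<Rightarrow> nat) \<Rightarrow> (nat \<Rightarrow> nat) \<Rightarrow> lang \<Rightarrow> fm set \<Rightarrow> lang \<Rightarrow> fm set \<Rightarrow> fm set \<Rightarrow> 'a struc \<Rightarrow> bool" where
  "con_sat ra fa L0 T0 L T p M \<longleftrightarrow> is_struc fa L M \<and> models M T0 \<and> models M T \<and> omits M p
     \<and> omega_saturated ra fa L0 M"

end

theory Submission
  imports Defs "HOL-Library.Countable"
begin


instance trm :: countable by countable_datatype
instance fm :: countable by countable_datatype

lemma eval_agree: "(\<forall>v\<in>vars_trm t. e v = e' v) \<Longrightarrow> eval M e t = eval M e' t"
proof (induction t)
  case (Fn f ts)
  have "map (eval M e) ts = map (eval M e') ts"
    using Fn by (auto intro!: map_cong)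
  then show ?case by (simp only: eval.simps)
qed simp

lemma sat_agree: "(\<forall>v\<in>frees \<phi>. e v = e' v) \<Longrightarrow> sat M e \<phi> = sat M e' \<phi>"
proof (induction \<phi> arbitrary: e e')
  case (Eq s t) then show ?case using eval_agree[of s e e' M] eval_agree[of t e e' M] by auto
next
  case (Rel r ts)
  have "map (eval M e) ts = map (eval M e') ts"
    using Rel.prems by (intro map_cong refl eval_agree) auto
  then show ?case by (simp only: sat.simps)
next
  case (Ex v p)
  have "\<And>a. sat M (e(v := a)) p = sat M (e'(v := a)) p"
    using Ex.prems by (intro Ex.IH) auto
  then show ?case by simp
next
  case (Conj p q)
  have "sat M e p = sat M e' p" "sat M e q = sat M e' q"
    using Conj.prems by (intro Conj.IH; auto)+
  then show ?case by simp
qed auto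

lemma finite_vars: "finite (vars_trm t)"
  by (induction t) auto

lemma finite_frees: "finite (frees \<phi>)"
  by (induction \<phi>) (auto simp: finite_vars)

lemma bounded_frees: "\<exists>K. frees \<phi> \<subseteq> {..<K}"
proof -
  obtain m where "\<forall>n\<in>frees \<phi>. n < m" using finite_frees[of \<phi>] finite_nat_set_iff_bounded by blast
  then show ?thesis by auto
qed

definition lk :: "nat list \<Rightarrow> nat \<Rightarrow> nat" where
  "lk xs i = (if i < length xs then xs ! i else 0)"

lemma lk_le: "lk xs i \<le> sum_list xs"
  by (auto simp: lk_def elem_le_sum_list)

lemma wf_trm_mono: "sublang L L' \<Longrightarrow> wf_trm fa L t \<Longrightarrow> wf_trm fa L' t"
  by (induction t) (auto simp: sublang_def)

lemma wf_fm_mono: "sublang L L' \<Longrightarrow> wf_fm ra fa L \<phi> \<Longrightarrow> wf_fm ra fa L' \<phi>"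
  by (induction \<phi>) (auto simp: sublang_def intro: wf_trm_mono)

lemma sublang_union1: "sublang L1 (lang_union L1 L2)"
  and sublang_union2: "sublang L2 (lang_union L1 L2)"
  by (auto simp: sublang_def lang_union_def)

lemma eval_dom: "is_struc fa L M \<Longrightarrow> wf_trm fa L t \<Longrightarrow> range e \<subseteq> dom M \<Longrightarrow> eval M e t \<in> dom M"
  proof (induction t)
  case (Fn f ts)
  have "set (map (eval M e) ts) \<subseteq> dom M" using Fn by auto
  then show ?case using Fn.prems unfolding is_struc_def by auto
qed auto

fun conjs :: "fm list \<Rightarrow> fm" where
  "conjs [] = Neg Bot"
| "conjs (p # ps) = Conj p (conjs ps)"

lemma sat_conjs: "sat M e (conjs l) = (\<forall>\<phi>\<in>set l. sat M e \<phi>)"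
  by (induction l) auto
lemma wf_conjs: "wf_fm ra fa L (conjs l) = (\<forall>\<phi>\<in>set l. wf_fm ra fa L \<phi>)"
  by (induction l) auto
lemma frees_conjs: "frees (conjs l) = (\<Union>\<phi>\<in>set l. frees \<phi>)"
  by (induction l) auto

lemma forth:
  assumes o2: "omega_saturated ra fa K0 N2"
    and as2: "assign N2 f2"
    and inv: "\<forall>\<phi>. wf_fm ra fa K0 \<phi> \<and> frees \<phi> \<subseteq> {..<m} \<longrightarrow> sat N1 f1 \<phi> = sat N2 f2 \<phi>"
    and x: "x \<in> dom N1"
  shows "\<exists>y\<in>dom N2. \<forall>\<phi>. wf_fm ra fa K0 \<phi> \<and> frees \<phi> \<subseteq> {..<Suc m} \<longrightarrow>
           sat N1 (f1(m:=x)) \<phi> = sat N2 (f2(m:=y)) \<phi>"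
proof -
  define \<Sigma> where "\<Sigma> = {\<phi>. wf_fm ra fa K0 \<phi> \<and> frees \<phi> \<subseteq> {..<Suc m} \<and> sat N1 (f1(m:=x)) \<phi>}"
  have fin: "\<exists>a\<in>dom N2. \<forall>\<phi>\<in>\<Sigma>0. sat N2 (f2(m := a)) \<phi>" if fs: "finite \<Sigma>0" "\<Sigma>0 \<subseteq> \<Sigma>" for \<Sigma>0
  proof -
    obtain l where l: "set l = \<Sigma>0" using finite_list[OF fs(1)] by blast
    let ?\<psi> = "Ex m (conjs l)"
    have wf: "wf_fm ra fa K0 ?\<psi>" using l fs(2) by (auto simp: wf_conjs \<Sigma>_def)
    have fr: "frees ?\<psi> \<subseteq> {..<m}" using l fs(2) by (force simp: frees_conjs \<Sigma>_def less_Suc_eq)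
    have "sat N1 f1 ?\<psi>" using x l that(2) by (auto simp: sat_conjs \<Sigma>_def)
    then have "sat N2 f2 ?\<psi>" using inv wf fr by blast
    then show ?thesis using l by (auto simp: sat_conjs)
  qed
  have "\<exists>a\<in>dom N2. \<forall>\<phi>\<in>\<Sigma>. sat N2 (f2(m := a)) \<phi>"
    using o2 unfolding omega_saturated_def
    apply (elim allE[of _ m] allE[of _ "{..<m}"] allE[of _ f2] allE[of _ \<Sigma>])
    using as2 fin by (auto simp: \<Sigma>_def lessThan_Suc)
  then obtain y where y: "y \<in> dom N2" "\<forall>\<phi>\<in>\<Sigma>. sat N2 (f2(m := y)) \<phi>" by blast
  have "sat N1 (f1(m:=x)) \<phi> = sat N2 (f2(m:=y)) \<phi>"
    if "wf_fm ra fa K0 \<phi>" "frees \<phi> \<subseteq> {..<Suc m}" for \<phi>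
  proof (cases "sat N1 (f1(m:=x)) \<phi>")
    case True then show ?thesis using y that by (auto simp: \<Sigma>_def)
  next
    case False
    then have "Neg \<phi> \<in> \<Sigma>" using that by (auto simp: \<Sigma>_def)
    then show ?thesis using y False by auto
  qed
  then show ?thesis using y by blast
qed



locale amal =
  fixes ra fa :: "nat \<Rightarrow> nat" and K0 K1 K2 :: lang and N1 :: "'a struc" and N2 :: "'b struc"
  assumes s1: "is_struc fa K1 N1" and s2: "is_struc fa K2 N2"
    and sub1: "sublang K0 K1" and sub2: "sublang K0 K2"
    and irs: "rsyms K1 \<inter> rsyms K2 \<subseteq> rsyms K0" and ifs: "fsyms K1 \<inter> fsyms K2 \<subseteq> fsyms K0"
    and o1: "omega_saturated ra fa K0 N1" and o2: "omega_saturated ra fa K0 N2"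
    and base: "\<And>\<phi> e1 e2. wf_fm ra fa K0 \<phi> \<Longrightarrow> frees \<phi> = {} \<Longrightarrow> assign N1 e1 \<Longrightarrow> assign N2 e2
               \<Longrightarrow> sat N1 e1 \<phi> = sat N2 e2 \<phi>"
begin

definition "c1 = (SOME x. x \<in> dom N1)"
definition "c2 = (SOME x. x \<in> dom N2)"
lemma c1: "c1 \<in> dom N1" using s1 unfolding c1_def is_struc_def by (simp add: some_in_eq)
lemma c2: "c2 \<in> dom N2" using s2 unfolding c2_def is_struc_def by (simp add: some_in_eq)

definition invar :: "nat \<Rightarrow> (nat \<Rightarrow> 'a) \<Rightarrow> (nat \<Rightarrow> 'b) \<Rightarrow> bool" where
  "invar m f1 f2 \<longleftrightarrow> range f1 \<subseteq> dom N1 \<and> range f2 \<subseteq> dom N2 \<and>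
     (\<forall>\<phi>. wf_fm ra fa K0 \<phi> \<and> frees \<phi> \<subseteq> {..<m} \<longrightarrow> sat N1 f1 \<phi> = sat N2 f2 \<phi>)"

lemma fwd_ex: "invar m f1 f2 \<Longrightarrow> x \<in> dom N1 \<Longrightarrow> \<exists>y. y \<in> dom N2 \<and> invar (Suc m) (f1(m:=x)) (f2(m:=y))"
proof -
  assume i: "invar m f1 f2" and x: "x \<in> dom N1"
  obtain y where y: "y \<in> dom N2" "\<forall>\<phi>. wf_fm ra fa K0 \<phi> \<and> frees \<phi> \<subseteq> {..<Suc m} \<longrightarrow>
           sat N1 (f1(m:=x)) \<phi> = sat N2 (f2(m:=y)) \<phi>"
    using forth[OF o2 _ _ x, of f2 m f1] i unfolding invar_def assign_def by blast
  have "invar (Suc m) (f1(m:=x)) (f2(m:=y))" unfolding invar_def using i x y unfolding invar_def by auto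
  then show ?thesis using y by blast
qed

lemma bwd_ex: "invar m f1 f2 \<Longrightarrow> y \<in> dom N2 \<Longrightarrow> \<exists>x. x \<in> dom N1 \<and> invar (Suc m) (f1(m:=x)) (f2(m:=y))"
proof -
  assume i: "invar m f1 f2" and y: "y \<in> dom N2"
  obtain x where x: "x \<in> dom N1" "\<forall>\<phi>. wf_fm ra fa K0 \<phi> \<and> frees \<phi> \<subseteq> {..<Suc m} \<longrightarrow>
           sat N2 (f2(m:=y)) \<phi> = sat N1 (f1(m:=x)) \<phi>"
    using forth[OF o1 _ _ y, of f1 m f2] i unfolding invar_def assign_def by metis
  have "invar (Suc m) (f1(m:=x)) (f2(m:=y))" unfolding invar_def using i x y unfolding invar_def by auto
  then show ?thesis using x by blast
qed

definition "fwd m f1 f2 x = (SOME y. y \<in> dom N2 \<and> invar (Suc m) (f1(m:=x)) (f2(m:=y)))"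
definition "bwd m f1 f2 y = (SOME x. x \<in> dom N1 \<and> invar (Suc m) (f1(m:=x)) (f2(m:=y)))"

lemma fwd: "invar m f1 f2 \<Longrightarrow> x \<in> dom N1 \<Longrightarrow> invar (Suc m) (f1(m:=x)) (f2(m:=fwd m f1 f2 x))"
  unfolding fwd_def by (drule (1) fwd_ex) (drule someI_ex, erule conjunct2)
lemma bwd: "invar m f1 f2 \<Longrightarrow> y \<in> dom N2 \<Longrightarrow> invar (Suc m) (f1(m:=bwd m f1 f2 y)) (f2(m:=y))"
  unfolding bwd_def by (drule (1) bwd_ex) (drule someI_ex, erule conjunct2)

definition pick1 :: "fm \<Rightarrow> nat \<Rightarrow> nat list \<Rightarrow> (nat \<Rightarrow> 'a) \<Rightarrow> 'a" where
  "pick1 \<phi> v xs f1 = (if wf_fm ra fa K1 \<phi> \<and> (\<exists>x\<in>dom N1. sat N1 ((f1 \<circ> lk xs)(v:=x)) \<phi>)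
     then (SOME x. x \<in> dom N1 \<and> sat N1 ((f1 \<circ> lk xs)(v:=x)) \<phi>) else c1)"
definition pick2 :: "fm \<Rightarrow> nat \<Rightarrow> nat list \<Rightarrow> (nat \<Rightarrow> 'b) \<Rightarrow> 'b" where
  "pick2 \<phi> v xs f2 = (if wf_fm ra fa K2 \<phi> \<and> (\<exists>x\<in>dom N2. sat N2 ((f2 \<circ> lk xs)(v:=x)) \<phi>)
     then (SOME x. x \<in> dom N2 \<and> sat N2 ((f2 \<circ> lk xs)(v:=x)) \<phi>) else c2)"

lemma pick1_dom: "pick1 \<phi> v xs f1 \<in> dom N1"
  unfolding pick1_def using c1 by (auto intro: someI2_ex)
lemma pick2_dom: "pick2 \<phi> v xs f2 \<in> dom N2"
  unfolding pick2_def using c2 by (auto intro: someI2_ex)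
lemma pick1_sat: "wf_fm ra fa K1 \<phi> \<Longrightarrow> x \<in> dom N1 \<Longrightarrow> sat N1 ((f1 \<circ> lk xs)(v:=x)) \<phi> \<Longrightarrow>
   sat N1 ((f1 \<circ> lk xs)(v:=pick1 \<phi> v xs f1)) \<phi>"
  unfolding pick1_def by (auto intro: someI2_ex)
lemma pick2_sat: "wf_fm ra fa K2 \<phi> \<Longrightarrow> x \<in> dom N2 \<Longrightarrow> sat N2 ((f2 \<circ> lk xs)(v:=x)) \<phi> \<Longrightarrow>
   sat N2 ((f2 \<circ> lk xs)(v:=pick2 \<phi> v xs f2)) \<phi>"
  unfolding pick2_def by (auto intro: someI2_ex)

definition task :: "nat \<Rightarrow> bool \<times> fm \<times> nat \<times> nat list" where
  "task m = from_nat (fst (prod_decode m))"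

definition step :: "nat \<Rightarrow> (nat \<Rightarrow> 'a) \<times> (nat \<Rightarrow> 'b) \<Rightarrow> (nat \<Rightarrow> 'a) \<times> (nat \<Rightarrow> 'b)" where
  "step m st = (case task m of (b, \<phi>, v, xs) \<Rightarrow>
     if b then ((fst st)(m := pick1 \<phi> v xs (fst st)), (snd st)(m := fwd m (fst st) (snd st) (pick1 \<phi> v xs (fst st))))
     else ((fst st)(m := bwd m (fst st) (snd st) (pick2 \<phi> v xs (snd st))), (snd st)(m := pick2 \<phi> v xs (snd st))))"

primrec seq :: "nat \<Rightarrow> (nat \<Rightarrow> 'a) \<times> (nat \<Rightarrow> 'b)" where
  "seq 0 = (\<lambda>_. c1, \<lambda>_. c2)"
| "seq (Suc m) = step m (seq m)"

lemma invar_seq: "invar m (fst (seq m)) (snd (seq m))"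
proof (induction m)
  case 0
  show ?case unfolding invar_def using c1 c2 base by (auto simp: assign_def)
next
  case (Suc m)
  obtain b \<phi> v xs where t: "task m = (b, \<phi>, v, xs)" by (cases "task m") auto
  show ?case
  proof (cases b)
    case True
    then have e: "seq (Suc m) = ((fst (seq m))(m := pick1 \<phi> v xs (fst (seq m))),
       (snd (seq m))(m := fwd m (fst (seq m)) (snd (seq m)) (pick1 \<phi> v xs (fst (seq m)))))"
      using t by (simp add: step_def)
    show ?thesis unfolding e fst_conv snd_conv by (rule fwd[OF Suc pick1_dom])
  next
    case False
    then have e: "seq (Suc m) = ((fst (seq m))(m := bwd m (fst (seq m)) (snd (seq m)) (pick2 \<phi> v xs (snd (seq m)))),
       (snd (seq m))(m := pick2 \<phi> v xs (snd (seq m))))"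
      using t by (simp add: step_def)
    show ?thesis unfolding e fst_conv snd_conv by (rule bwd[OF Suc pick2_dom])
  qed
qed

lemma step_other: "i \<noteq> m \<Longrightarrow> fst (step m st) i = fst st i \<and> snd (step m st) i = snd st i"
  by (cases "task m") (auto simp: step_def)

definition "A i = fst (seq (Suc i)) i"
definition "B i = snd (seq (Suc i)) i"

lemma seq_AB: "i < m \<Longrightarrow> fst (seq m) i = A i \<and> snd (seq m) i = B i"
proof (induction m)
  case (Suc m)
  then show ?case
    by (cases "i = m") (auto simp: A_def B_def step_other less_Suc_eq)
qed simp

lemma A_dom: "range A \<subseteq> dom N1" and B_dom: "range B \<subseteq> dom N2"
  using invar_seq unfolding A_def B_def invar_def by blast+

lemma equiv: "wf_fm ra fa K0 \<phi> \<Longrightarrow> sat N1 A \<phi> = sat N2 B \<phi>"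
proof -
  assume wf: "wf_fm ra fa K0 \<phi>"
  obtain m where m: "frees \<phi> \<subseteq> {..<m}" using bounded_frees by blast
  have "sat N1 A \<phi> = sat N1 (fst (seq m)) \<phi>"
    using m seq_AB by (intro sat_agree) auto
  also have "\<dots> = sat N2 (snd (seq m)) \<phi>"
    using invar_seq[of m] wf m unfolding invar_def by blast
  also have "\<dots> = sat N2 B \<phi>"
    using m seq_AB by (intro sat_agree) auto
  finally show ?thesis .
qed

lemma task_enc: "\<exists>m\<ge>N. task m = t"
proof -
  let ?m = "prod_encode (to_nat t, N)"
  have "task ?m = t" by (simp add: task_def)
  moreover have "N \<le> ?m" by (rule le_prod_encode_2)
  ultimately show ?thesis by blast
qed

lemma TV1:
  assumes wf: "wf_fm ra fa K1 \<phi>" and x: "x \<in> dom N1" and s: "sat N1 ((A \<circ> e)(v:=x)) \<phi>"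
  shows "\<exists>n. sat N1 ((A \<circ> e)(v:=A n)) \<phi>"
proof -
  obtain K where K: "frees \<phi> \<subseteq> {..<K}" using bounded_frees by blast
  define xs where "xs = map e [0..<K]"
  have ag: "\<And>y. \<forall>u\<in>frees \<phi>. ((A \<circ> e)(v:=y)) u = ((A \<circ> lk xs)(v:=y)) u"
  proof
    fix y u assume u: "u \<in> frees \<phi>"
    then have "u < K" using K by blast
    then have "lk xs u = e u" by (simp add: xs_def lk_def)
    then show "((A \<circ> e)(v:=y)) u = ((A \<circ> lk xs)(v:=y)) u" by simp
  qed
  obtain m where m: "Suc (sum_list xs) \<le> m" "task m = (True, \<phi>, v, xs)" using task_enc by blast
  have lk_m: "lk xs i < m" for i using m(1) lk_le[of xs i] by linarith
  have f1: "fst (seq m) \<circ> lk xs = A \<circ> lk xs"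
    using seq_AB lk_m by auto
  have Am: "A m = pick1 \<phi> v xs (fst (seq m))"
    using m(2) by (simp add: A_def step_def)
  have eq: "\<And>y. sat N1 ((A \<circ> e)(v:=y)) \<phi> = sat N1 ((fst (seq m) \<circ> lk xs)(v:=y)) \<phi>"
    unfolding f1 by (rule sat_agree[OF ag])
  have "sat N1 ((fst (seq m) \<circ> lk xs)(v:=x)) \<phi>"
    using s eq by blast
  from pick1_sat[OF wf x this] have "sat N1 ((fst (seq m) \<circ> lk xs)(v:=A m)) \<phi>"
    unfolding Am[symmetric] .
  then have "sat N1 ((A \<circ> e)(v:=A m)) \<phi>"
    using eq by blast
  then show ?thesis by blast
qed

lemma TV2:
  assumes wf: "wf_fm ra fa K2 \<phi>" and x: "x \<in> dom N2" and s: "sat N2 ((B \<circ> e)(v:=x)) \<phi>"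
  shows "\<exists>n. sat N2 ((B \<circ> e)(v:=B n)) \<phi>"
proof -
  obtain K where K: "frees \<phi> \<subseteq> {..<K}" using bounded_frees by blast
  define xs where "xs = map e [0..<K]"
  have ag: "\<And>y. \<forall>u\<in>frees \<phi>. ((B \<circ> e)(v:=y)) u = ((B \<circ> lk xs)(v:=y)) u"
  proof
    fix y u assume u: "u \<in> frees \<phi>"
    then have "u < K" using K by blast
    then have "lk xs u = e u" by (simp add: xs_def lk_def)
    then show "((B \<circ> e)(v:=y)) u = ((B \<circ> lk xs)(v:=y)) u" by simp
  qed
  obtain m where m: "Suc (sum_list xs) \<le> m" "task m = (False, \<phi>, v, xs)" using task_enc by blast
  have lk_m: "lk xs i < m" for i using m(1) lk_le[of xs i] by linarith
  have f2: "snd (seq m) \<circ> lk xs = B \<circ> lk xs"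
    using seq_AB lk_m by auto
  have Bm: "B m = pick2 \<phi> v xs (snd (seq m))"
    using m(2) by (simp add: B_def step_def)
  have eq: "\<And>y. sat N2 ((B \<circ> e)(v:=y)) \<phi> = sat N2 ((snd (seq m) \<circ> lk xs)(v:=y)) \<phi>"
    unfolding f2 by (rule sat_agree[OF ag])
  have "sat N2 ((snd (seq m) \<circ> lk xs)(v:=x)) \<phi>"
    using s eq by blast
  from pick2_sat[OF wf x this] have "sat N2 ((snd (seq m) \<circ> lk xs)(v:=B m)) \<phi>"
    unfolding Bm[symmetric] .
  then have "sat N2 ((B \<circ> e)(v:=B m)) \<phi>"
    using eq by blast
  then show ?thesis by blast
qed


lemma closure1: assumes f: "f \<in> fsyms K1" and l: "length ns = fa f"
  shows "fnt N1 f (map A ns) \<in> range A"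
proof -
  let ?k = "fa f"
  let ?\<phi> = "Eq (Var ?k) (Fn f (map Var [0..<?k]))"
  let ?x = "fnt N1 f (map A ns)"
  have wf: "wf_fm ra fa K1 ?\<phi>" using f by auto
  have "set (map A ns) \<subseteq> dom N1" using A_dom by auto
  then have x: "?x \<in> dom N1" using s1 f l unfolding is_struc_def by auto
  have mp: "map (\<lambda>i. if i = fa f then y else A (lk ns i)) [0..<fa f] = map A ns" for y
    using l by (auto simp: lk_def intro: nth_equalityI)
  have "sat N1 ((A \<circ> lk ns)(?k := ?x)) ?\<phi>"
    by (simp add: mp o_def)
  then obtain n where "sat N1 ((A \<circ> lk ns)(?k := A n)) ?\<phi>" using TV1[OF wf x] by blast
  then have "A n = ?x" by (simp add: mp o_def)
  then show ?thesis by (metis rangeI)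
qed

lemma closure2: assumes f: "f \<in> fsyms K2" and l: "length ns = fa f"
  shows "fnt N2 f (map B ns) \<in> range B"
proof -
  let ?k = "fa f"
  let ?\<phi> = "Eq (Var ?k) (Fn f (map Var [0..<?k]))"
  let ?x = "fnt N2 f (map B ns)"
  have wf: "wf_fm ra fa K2 ?\<phi>" using f by auto
  have "set (map B ns) \<subseteq> dom N2" using B_dom by auto
  then have x: "?x \<in> dom N2" using s2 f l unfolding is_struc_def by auto
  have mp: "map (\<lambda>i. if i = fa f then y else B (lk ns i)) [0..<fa f] = map B ns" for y
    using l by (auto simp: lk_def intro: nth_equalityI)
  have "sat N2 ((B \<circ> lk ns)(?k := ?x)) ?\<phi>"
    by (simp add: mp o_def)
  then obtain n where "sat N2 ((B \<circ> lk ns)(?k := B n)) ?\<phi>" using TV2[OF wf x] by blast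
  then have "B n = ?x" by (simp add: mp o_def)
  then show ?thesis by (metis rangeI)
qed

definition "idx y = (LEAST n. A n = y)"
definition "jdx z = (LEAST n. B n = z)"

definition MM :: "nat struc" where
  "MM = \<lparr>dom = {n. idx (A n) = n},
         fnt = (\<lambda>f ns. if f \<in> fsyms K1 then idx (fnt N1 f (map A ns))
                       else idx (A (jdx (fnt N2 f (map B ns))))),
         rel = (\<lambda>r ns. if r \<in> rsyms K1 then rel N1 r (map A ns) else rel N2 r (map B ns))\<rparr>"

lemma idx_A: "A (idx (A k)) = A k"
  unfolding idx_def by (rule LeastI[of _ k]) simp
lemma idx_range: "y \<in> range A \<Longrightarrow> A (idx y) = y"
  using idx_A by auto
lemma jdx_range: "z \<in> range B \<Longrightarrow> B (jdx z) = z"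
  unfolding jdx_def by (auto intro: LeastI)
lemma idx_dom: "idx (A k) \<in> dom MM"
  by (simp add: MM_def idx_A)
lemma idx_dom': "y \<in> range A \<Longrightarrow> idx y \<in> dom MM"
  using idx_dom by auto
lemma A_inj: "n \<in> dom MM \<Longrightarrow> m \<in> dom MM \<Longrightarrow> A n = A m \<Longrightarrow> n = m"
  by (simp add: MM_def)

lemma AB_eq: "A i = A j \<longleftrightarrow> B i = B j"
  using equiv[of "Eq (Var i) (Var j)"] by simp
lemma B_inj: "n \<in> dom MM \<Longrightarrow> m \<in> dom MM \<Longrightarrow> B n = B m \<Longrightarrow> n = m"
  using A_inj AB_eq by blast

lemma fn_eq: "f \<in> fsyms K0 \<Longrightarrow> length ns = fa f \<Longrightarrow>
   (A n = fnt N1 f (map A ns)) \<longleftrightarrow> (B n = fnt N2 f (map B ns))"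
  using equiv[of "Eq (Var n) (Fn f (map Var ns))"] by (simp add: comp_def)

lemma rel_eq: "r \<in> rsyms K0 \<Longrightarrow> length ns = ra r \<Longrightarrow> rel N1 r (map A ns) = rel N2 r (map B ns)"
  using equiv[of "Rel r (map Var ns)"] by (simp add: comp_def)

lemma MM_struc: "is_struc fa (lang_union K1 K2) MM"
  unfolding is_struc_def
proof (intro conjI ballI allI impI)
  show "dom MM \<noteq> {}" using idx_dom by blast
next
  fix f as assume f: "f \<in> fsyms (lang_union K1 K2)" and a: "length as = fa f \<and> set as \<subseteq> dom MM"
  show "fnt MM f as \<in> dom MM"
  proof (cases "f \<in> fsyms K1")
    case True
    then show ?thesis using closure1[OF True] a idx_dom' by (simp add: MM_def)
  next
    case False
    then show ?thesis using idx_dom by (simp add: MM_def)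
  qed
qed

lemma term1: "wf_trm fa K1 t \<Longrightarrow> A (eval MM e t) = eval N1 (A \<circ> e) t"
proof (induction t)
  case (Fn f ts)
  have m: "map A (map (eval MM e) ts) = map (eval N1 (A \<circ> e)) ts"
    using Fn by (auto simp: comp_def)
  have f: "f \<in> fsyms K1" "length (map (eval MM e) ts) = fa f" using Fn.prems by auto
  have "A (eval MM e (Fn f ts)) = A (idx (fnt N1 f (map A (map (eval MM e) ts))))"
    using f by (simp add: MM_def)
  also have "\<dots> = fnt N1 f (map A (map (eval MM e) ts))"
    by (rule idx_range[OF closure1[OF f]])
  finally have X: "A (eval MM e (Fn f ts)) = fnt N1 f (map A (map (eval MM e) ts))" .
  show ?case using X unfolding m by (simp only: eval.simps)
qed simp

lemma term2: "wf_trm fa K2 t \<Longrightarrow> B (eval MM e t) = eval N2 (B \<circ> e) t"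
proof (induction t)
  case (Fn f ts)
  let ?ns = "map (eval MM e) ts"
  have m: "map B ?ns = map (eval N2 (B \<circ> e)) ts"
    using Fn by (auto simp: comp_def)
  have f: "f \<in> fsyms K2" "length ?ns = fa f" using Fn.prems by auto
  have "B (eval MM e (Fn f ts)) = fnt N2 f (map B ?ns)"
  proof (cases "f \<in> fsyms K1")
    case True
    then have f0: "f \<in> fsyms K0" using ifs f by blast
    let ?y = "fnt N1 f (map A ?ns)"
    have "A (idx ?y) = ?y" by (rule idx_range[OF closure1[OF True f(2)]])
    then have "B (idx ?y) = fnt N2 f (map B ?ns)" using fn_eq[OF f0 f(2)] by blast
    then show ?thesis using True by (simp add: MM_def)
  next
    case False
    let ?z = "fnt N2 f (map B ?ns)"
    have z: "B (jdx ?z) = ?z" by (rule jdx_range[OF closure2[OF f]])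
    have "A (idx (A (jdx ?z))) = A (jdx ?z)" by (rule idx_A)
    then have "B (idx (A (jdx ?z))) = B (jdx ?z)" using AB_eq by blast
    then show ?thesis using False z by (simp add: MM_def)
  qed
  then show ?case unfolding m by (simp only: eval.simps)
qed simp

lemma eval_MM_dom: "wf_trm fa (lang_union K1 K2) t \<Longrightarrow> range e \<subseteq> dom MM \<Longrightarrow> eval MM e t \<in> dom MM"
  by (rule eval_dom[OF MM_struc])

lemma fm1: "wf_fm ra fa K1 \<phi> \<Longrightarrow> range e \<subseteq> dom MM \<Longrightarrow> sat MM e \<phi> = sat N1 (A \<circ> e) \<phi>"
proof (induction \<phi> arbitrary: e)
  case (Eq s t)
  have d: "eval MM e s \<in> dom MM" "eval MM e t \<in> dom MM"
    using Eq by (auto intro!: eval_MM_dom wf_trm_mono[OF sublang_union1])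
  have "sat MM e (Eq s t) = (A (eval MM e s) = A (eval MM e t))"
    using A_inj[OF d] by auto
  moreover have "A (eval MM e s) = eval N1 (A \<circ> e) s" "A (eval MM e t) = eval N1 (A \<circ> e) t"
    using term1 Eq.prems by auto
  ultimately show ?case by (simp only: sat.simps)
next
  case (Rel r ts)
  have "map A (map (eval MM e) ts) = map (eval N1 (A \<circ> e)) ts"
    using Rel term1 by auto
  moreover have "rel MM r xs = rel N1 r (map A xs)" for xs using Rel.prems by (simp add: MM_def)
  ultimately show ?case by (simp only: sat.simps)
next
  case (Ex v p)
  have upd: "A \<circ> e(v := n) = (A \<circ> e)(v := A n)" for n by auto
  have eqn: "sat MM (e(v:=n)) p = sat N1 ((A \<circ> e)(v := A n)) p" if n: "n \<in> dom MM" for n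
  proof -
    have "range (e(v:=n)) \<subseteq> dom MM" using n Ex.prems(2) by auto
    from Ex.IH[OF _ this] Ex.prems(1) have "sat MM (e(v:=n)) p = sat N1 (A \<circ> e(v := n)) p" by (simp add: fun_upd_def o_def)
    then show ?thesis unfolding upd .
  qed
  have "sat MM e (Ex v p) = (\<exists>n\<in>dom MM. sat N1 ((A \<circ> e)(v := A n)) p)"
    using eqn by auto
  also have "\<dots> = (\<exists>x\<in>dom N1. sat N1 ((A \<circ> e)(v := x)) p)"
  proof
    assume "\<exists>n\<in>dom MM. sat N1 ((A \<circ> e)(v := A n)) p"
    then show "\<exists>x\<in>dom N1. sat N1 ((A \<circ> e)(v := x)) p" using A_dom by blast
  next
    assume "\<exists>x\<in>dom N1. sat N1 ((A \<circ> e)(v := x)) p"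
    then obtain x where x: "x \<in> dom N1" "sat N1 ((A \<circ> e)(v := x)) p" by blast
    obtain k where "sat N1 ((A \<circ> e)(v := A k)) p" using TV1[OF _ x] Ex.prems(1) by auto
    then show "\<exists>n\<in>dom MM. sat N1 ((A \<circ> e)(v := A n)) p"
      using idx_dom[of k] idx_A[of k] by metis
  qed
  finally show ?case by (simp add: o_def)
qed auto

lemma fm2: "wf_fm ra fa K2 \<phi> \<Longrightarrow> range e \<subseteq> dom MM \<Longrightarrow> sat MM e \<phi> = sat N2 (B \<circ> e) \<phi>"
proof (induction \<phi> arbitrary: e)
  case (Eq s t)
  have d: "eval MM e s \<in> dom MM" "eval MM e t \<in> dom MM"
    using Eq by (auto intro!: eval_MM_dom wf_trm_mono[OF sublang_union2])
  have "sat MM e (Eq s t) = (B (eval MM e s) = B (eval MM e t))"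
    using B_inj[OF d] by auto
  moreover have "B (eval MM e s) = eval N2 (B \<circ> e) s" "B (eval MM e t) = eval N2 (B \<circ> e) t"
    using term2 Eq.prems by auto
  ultimately show ?case by (simp only: sat.simps)
next
  case (Rel r ts)
  have m: "map B (map (eval MM e) ts) = map (eval N2 (B \<circ> e)) ts"
    using Rel term2 by auto
  have r: "r \<in> rsyms K2" "length (map (eval MM e) ts) = ra r" using Rel by auto
  have "rel MM r (map (eval MM e) ts) = rel N2 r (map B (map (eval MM e) ts))"
  proof (cases "r \<in> rsyms K1")
    case True
    then have "r \<in> rsyms K0" using irs r by blast
    then show ?thesis using True rel_eq[OF _ r(2)] by (simp add: MM_def)
  next
    case False then show ?thesis by (simp add: MM_def)
  qed
  then show ?case unfolding m by (simp only: sat.simps)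
next
  case (Ex v p)
  have upd: "B \<circ> e(v := n) = (B \<circ> e)(v := B n)" for n by auto
  have eqn: "sat MM (e(v:=n)) p = sat N2 ((B \<circ> e)(v := B n)) p" if n: "n \<in> dom MM" for n
  proof -
    have "range (e(v:=n)) \<subseteq> dom MM" using n Ex.prems(2) by auto
    from Ex.IH[OF _ this] Ex.prems(1) have "sat MM (e(v:=n)) p = sat N2 (B \<circ> e(v := n)) p" by (simp add: fun_upd_def o_def)
    then show ?thesis unfolding upd .
  qed
  have "sat MM e (Ex v p) = (\<exists>n\<in>dom MM. sat N2 ((B \<circ> e)(v := B n)) p)"
    using eqn by auto
  also have "\<dots> = (\<exists>x\<in>dom N2. sat N2 ((B \<circ> e)(v := x)) p)"
  proof
    assume "\<exists>n\<in>dom MM. sat N2 ((B \<circ> e)(v := B n)) p"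
    then show "\<exists>x\<in>dom N2. sat N2 ((B \<circ> e)(v := x)) p" using B_dom by blast
  next
    assume "\<exists>x\<in>dom N2. sat N2 ((B \<circ> e)(v := x)) p"
    then obtain x where x: "x \<in> dom N2" "sat N2 ((B \<circ> e)(v := x)) p" by blast
    obtain k where k: "sat N2 ((B \<circ> e)(v := B k)) p" using TV2[OF _ x] Ex.prems(1) by auto
    have "B (idx (A k)) = B k" using idx_A[of k] AB_eq by blast
    then show "\<exists>n\<in>dom MM. sat N2 ((B \<circ> e)(v := B n)) p"
      using idx_dom[of k] k by metis
  qed
  finally show ?case by (simp add: o_def)
qed auto

lemma amal_result:
  "\<exists>M :: nat struc. \<exists>a b. is_struc fa (lang_union K1 K2) M \<and> range a \<subseteq> dom N1 \<and> range b \<subseteq> dom N2 \<and>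
     (\<forall>\<phi> e. wf_fm ra fa K1 \<phi> \<longrightarrow> assign M e \<longrightarrow> sat M e \<phi> = sat N1 (a \<circ> e) \<phi>) \<and>
     (\<forall>\<phi> e. wf_fm ra fa K2 \<phi> \<longrightarrow> assign M e \<longrightarrow> sat M e \<phi> = sat N2 (b \<circ> e) \<phi>)"
  using MM_struc A_dom B_dom fm1 fm2 unfolding assign_def by blast

end

lemma lang_union_self: "lang_union L L = L"
  by (simp add: lang_union_def)

lemma sublang_refl: "sublang L L" by (simp add: sublang_def)

lemma is_struc_sub: "is_struc fa L M \<Longrightarrow> sublang L0 L \<Longrightarrow> is_struc fa L0 M"
  unfolding is_struc_def sublang_def by blast

lemma LS_decide:
  fixes N :: "'a struc"
  assumes s: "is_struc fa L0 N" and m: "models N T0" and o: "omega_saturated ra fa L0 N"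
    and th: "theory_of ra fa L0 T0"
    and wf: "wf_fm ra fa L0 \<psi>" and fr: "frees \<psi> = {}"
    and all: "\<forall>M :: nat struc. is_struc fa L0 M \<and> models M T0 \<longrightarrow> (\<forall>e. assign M e \<longrightarrow> sat M e \<psi>)"
    and e1: "assign N e1"
  shows "sat N e1 \<psi>"
proof -
  have "amal ra fa L0 L0 L0 N N"
    unfolding amal_def using s o sublang_refl
    by (auto intro: sat_agree[where e=e1 and e'=e2 for e1 e2, THEN iffD1] sat_agree[where e=e1 and e'=e2 for e1 e2, THEN iffD2])
  from amal.amal_result[OF this] obtain M :: "nat struc" and a b where
    M: "is_struc fa (lang_union L0 L0) M" "range a \<subseteq> dom N"
      "\<forall>\<phi> e. wf_fm ra fa L0 \<phi> \<longrightarrow> assign M e \<longrightarrow> sat M e \<phi> = sat N (a \<circ> e) \<phi>"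
    by blast
  have Ms: "is_struc fa L0 M" using M(1) by (simp add: lang_union_self)
  have ae: "assign N (a \<circ> e)" for e using M(2) by (auto simp: assign_def)
  have "models M T0"
    unfolding models_def
  proof (intro ballI allI impI)
    fix p e assume p: "p \<in> T0" and e: "assign M e"
    have "wf_fm ra fa L0 p" using th p by (auto simp: theory_of_def sentence_def)
    then show "sat M e p" using M(3) e m p ae unfolding models_def by blast
  qed
  then have allM: "\<forall>e. assign M e \<longrightarrow> sat M e \<psi>" using all Ms by blast
  obtain c where c: "c \<in> dom M" using Ms unfolding is_struc_def by blast
  have "assign M (\<lambda>_. c)" using c by (auto simp: assign_def)
  then have "sat N (a \<circ> (\<lambda>_. c)) \<psi>" using allM M(3) wf by blast
  then show ?thesis using fr sat_agree by blast
qed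

theorem mainTheorem4:
  fixes ra fa :: "nat \<Rightarrow> nat"
    and L0 L1 L2 :: lang
    and T0 T1 T2 p1 p2 :: "fm set"
    and xs1 xs2 :: "nat list"
    and M1 :: "'a struc" and M2 :: "'b struc"
  assumes "recursive_lang ra fa L0" "recursive_lang ra fa L1" "recursive_lang ra fa L2"
    and "sublang L0 L1" "sublang L0 L2" "lang_inter L1 L2 = L0"
    and "complete_theory ra fa L0 T0"
    and "theory_of ra fa L1 T1" "theory_of ra fa L2 T2"
    and "type_of ra fa L1 xs1 p1" "type_of ra fa L2 xs2 p2"
    and "con_sat ra fa L0 T0 L1 T1 p1 M1"
    and "con_sat ra fa L0 T0 L2 T2 p2 M2"
  shows "\<exists>M :: nat struc. is_struc fa (lang_union L1 L2) M \<and>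
           models M T0 \<and> models M T1 \<and> models M T2 \<and> omits M p1 \<and> omits M p2"
proof -
  note sub1 = assms(4) and sub2 = assms(5) and inter = assms(6) and compl = assms(7)
  have c1: "is_struc fa L1 M1" "models M1 T0" "models M1 T1" "omits M1 p1" "omega_saturated ra fa L0 M1"
    using assms(12) by (auto simp: con_sat_def)
  have c2: "is_struc fa L2 M2" "models M2 T0" "models M2 T2" "omits M2 p2" "omega_saturated ra fa L0 M2"
    using assms(13) by (auto simp: con_sat_def)
  have th0: "theory_of ra fa L0 T0" using compl by (simp add: complete_theory_def)
  have base: "sat M1 e1 \<phi> = sat M2 e2 \<phi>"
    if wf: "wf_fm ra fa L0 \<phi>" and fr: "frees \<phi> = {}" and a1: "assign M1 e1" and a2: "assign M2 e2"
    for \<phi> e1 e2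
  proof -
    have sent: "sentence ra fa L0 \<phi>" using wf fr by (simp add: sentence_def)
    have wfn: "wf_fm ra fa L0 (Neg \<phi>)" "frees (Neg \<phi>) = {}" using wf fr by auto
    have s1: "is_struc fa L0 M1" by (rule is_struc_sub[OF c1(1) sub1])
    have s2: "is_struc fa L0 M2" by (rule is_struc_sub[OF c2(1) sub2])
    from compl sent consider
      (pos) "\<forall>M :: nat struc. is_struc fa L0 M \<and> models M T0 \<longrightarrow> (\<forall>e. assign M e \<longrightarrow> sat M e \<phi>)"
    | (neg) "\<forall>M :: nat struc. is_struc fa L0 M \<and> models M T0 \<longrightarrow> (\<forall>e. assign M e \<longrightarrow> sat M e (Neg \<phi>))"
      unfolding complete_theory_def by blast
    then show ?thesis
    proof cases
      case pos
      have "sat M1 e1 \<phi>" by (rule LS_decide[OF s1 c1(2) c1(5) th0 wf fr pos a1])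
      moreover have "sat M2 e2 \<phi>" by (rule LS_decide[OF s2 c2(2) c2(5) th0 wf fr pos a2])
      ultimately show ?thesis by simp
    next
      case neg
      have "sat M1 e1 (Neg \<phi>)" by (rule LS_decide[OF s1 c1(2) c1(5) th0 wfn neg a1])
      moreover have "sat M2 e2 (Neg \<phi>)" by (rule LS_decide[OF s2 c2(2) c2(5) th0 wfn neg a2])
      ultimately show ?thesis by simp
    qed
  qed
  have ir: "rsyms L1 \<inter> rsyms L2 \<subseteq> rsyms L0" and if': "fsyms L1 \<inter> fsyms L2 \<subseteq> fsyms L0"
    using inter by (auto simp: lang_inter_def)
  have "amal ra fa L0 L1 L2 M1 M2"
    unfolding amal_def using c1 c2 sub1 sub2 ir if' base by blast
  from amal.amal_result[OF this] obtain M :: "nat struc" and a b where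
    M: "is_struc fa (lang_union L1 L2) M" "range a \<subseteq> dom M1" "range b \<subseteq> dom M2"
      "\<forall>\<phi> e. wf_fm ra fa L1 \<phi> \<longrightarrow> assign M e \<longrightarrow> sat M e \<phi> = sat M1 (a \<circ> e) \<phi>"
      "\<forall>\<phi> e. wf_fm ra fa L2 \<phi> \<longrightarrow> assign M e \<longrightarrow> sat M e \<phi> = sat M2 (b \<circ> e) \<phi>"
    by blast
  have ae: "assign M1 (a \<circ> e)" "assign M2 (b \<circ> e)" for e using M(2,3) by (auto simp: assign_def)
  have wf1: "wf_fm ra fa L1 p" if "p \<in> T1" for p using assms(8) that by (auto simp: theory_of_def sentence_def)
  have wf2: "wf_fm ra fa L2 p" if "p \<in> T2" for p using assms(9) that by (auto simp: theory_of_def sentence_def)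
  have wf0: "wf_fm ra fa L1 p" if "p \<in> T0" for p
    using th0 that wf_fm_mono[OF sub1] by (auto simp: theory_of_def sentence_def)
  have m0: "models M T0" unfolding models_def
    using M(4) wf0 ae c1(2) unfolding models_def by blast
  have m1: "models M T1" unfolding models_def
    using M(4) wf1 ae c1(3) unfolding models_def by blast
  have m2: "models M T2" unfolding models_def
    using M(5) wf2 ae c2(3) unfolding models_def by blast
  have o1: "omits M p1" unfolding omits_def
  proof (intro allI impI)
    fix e assume e: "assign M e"
    obtain \<psi> where "\<psi> \<in> p1" "\<not> sat M1 (a \<circ> e) \<psi>" using c1(4) ae unfolding omits_def by blast
    moreover have "wf_fm ra fa L1 \<psi>" using assms(10) \<open>\<psi> \<in> p1\<close> by (auto simp: type_of_def)
    ultimately show "\<exists>\<psi>\<in>p1. \<not> sat M e \<psi>" using M(4) e by blast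
  qed
  have o2: "omits M p2" unfolding omits_def
  proof (intro allI impI)
    fix e assume e: "assign M e"
    obtain \<psi> where "\<psi> \<in> p2" "\<not> sat M2 (b \<circ> e) \<psi>" using c2(4) ae unfolding omits_def by blast
    moreover have "wf_fm ra fa L2 \<psi>" using assms(11) \<open>\<psi> \<in> p2\<close> by (auto simp: type_of_def)
    ultimately show "\<exists>\<psi>\<in>p2. \<not> sat M e \<psi>" using M(5) e by blast
  qed
  show ?thesis using M(1) m0 m1 m2 o1 o2 by blast
qed

end
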